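(* Let $f:\mathbb{R}^{m_1}\to(-\infty,\infty]$ and $g:\mathbb{R}^{m_2}\to(-\infty,\infty]$ be proper closed convex functions, $M:\mathbb{R}^{m_1}\to\mathbb{R}^n$ and $C:\mathbb{R}^{m_2}\to\mathbb{R}^n$ linear operators, and $d\in\mathbb{R}^n$. Let $L$, $h_1$, $h_2$ and $S_e(\partial h_1,\partial h_2)$ be as in the context. (i) If $(u^*,v^*,z^* )$ is a saddle point of $L$, then $(z^*,d-Cv^* )\in S_e(\partial h_1,\partial h_2)$. (ii) Assume moreover (A.2) $\mathrm{ri}(\mathrm{dom}\, f^* )\cap \mathrm{range}(M^* )\neq\emptyset$ and (A.3) $\mathrm{ri}(\mathrm{dom}\, g^* )\cap\mathrm{range}(C^* )\neq\emptyset$. Then for every $(z^*,w^* )\in S_e(\partial h_1,\partial h_2)$ there exist $u^*\in\mathbb{R}^{m_1}$ and $v^*\in\mathbb{R}^{m_2}$ such that $w^*=d-Cv^*$, $w^*=Mu^*$, and $(u^*,v^*,z^* )$ is a saddle point of $L$.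
   Context: The Lagrangian is $L(u,v,z)=f(u)+g(v)+\langle Mu+Cv-d,z\rangle$ on $\mathbb{R}^{m_1}\times\mathbb{R}^{m_2}\times\mathbb{R}^n$. A saddle point of $L$ is a point $(u^*,v^*,z^* )$ with $L(u^*,v^*,z^* )$ finite and $\min_{(u,v)}L(u,v,z^* )=L(u^*,v^*,z^* )=\max_{z}L(u^*,v^*,z)$. For a convex function $\theta$, $\theta^*(y)=\sup_x \langle y,x\rangle-\theta(x)$ is its Fenchel–Legendre conjugate, $\mathrm{ri}$ denotes relative interior, and $M^*,C^*$ are adjoints. Define $h_1(z)=f^*(-M^*z)$, $h_2(z)=g^*(-C^*z)+\langle d,z\rangle$, and the extended solution set $S_e(\partial h_1,\partial h_2)=\{(z,w)\in\mathbb{R}^n\times\mathbb{R}^n: -w\in\partial h_1(z),\ w\in\partial h_2(z)\}$, where $\partial$ denotes the convex subdifferential. *)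

theory Defs
  imports "HOL-Analysis.Analysis"
begin

text \<open>Extended-real valued functions model functions into (-inf, +inf].\<close>

definition edom :: "('a \<Rightarrow> ereal) \<Rightarrow> 'a set" where
  "edom \<theta> = {x. \<theta> x < \<infinity>}"

definition epigraph_e :: "('a \<Rightarrow> ereal) \<Rightarrow> ('a \<times> real) set" where
  "epigraph_e \<theta> = {(x, t). \<theta> x \<le> ereal t}"

definition proper_fun :: "('a \<Rightarrow> ereal) \<Rightarrow> bool" where
  "proper_fun \<theta> \<longleftrightarrow> (\<forall>x. \<theta> x \<noteq> -\<infinity>) \<and> (\<exists>x. \<theta> x < \<infinity>)"

definition convex_fun :: "('a::real_vector \<Rightarrow> ereal) \<Rightarrow> bool" where
  "convex_fun \<theta> \<longleftrightarrow> convex (epigraph_e \<theta>)"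

definition closed_fun :: "('a::topological_space \<Rightarrow> ereal) \<Rightarrow> bool" where
  "closed_fun \<theta> \<longleftrightarrow> closed (epigraph_e \<theta>)"

definition conj_fun :: "('a::real_inner \<Rightarrow> ereal) \<Rightarrow> 'a \<Rightarrow> ereal" where
  "conj_fun \<theta> y = (SUP x. ereal (inner y x) - \<theta> x)"

definition subdiff :: "('a::real_inner \<Rightarrow> ereal) \<Rightarrow> 'a \<Rightarrow> 'a set" where
  "subdiff \<theta> z = {w. \<bar>\<theta> z\<bar> \<noteq> \<infinity> \<and> (\<forall>y. \<theta> z + ereal (inner w (y - z)) \<le> \<theta> y)}"

definition lagrangian ::
  "('a::euclidean_space \<Rightarrow> ereal) \<Rightarrow> ('b::euclidean_space \<Rightarrow> ereal) \<Rightarrow>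
   ('a \<Rightarrow> 'c::euclidean_space) \<Rightarrow> ('b \<Rightarrow> 'c) \<Rightarrow> 'c \<Rightarrow> 'a \<Rightarrow> 'b \<Rightarrow> 'c \<Rightarrow> ereal" where
  "lagrangian f g M C d u v z = f u + g v + ereal (inner (M u + C v - d) z)"

definition saddle_point ::
  "('a \<Rightarrow> 'b \<Rightarrow> 'c \<Rightarrow> ereal) \<Rightarrow> 'a \<Rightarrow> 'b \<Rightarrow> 'c \<Rightarrow> bool" where
  "saddle_point L u v z \<longleftrightarrow>
     \<bar>L u v z\<bar> \<noteq> \<infinity> \<and>
     (INF p. L (fst p) (snd p) z) = L u v z \<and>
     (SUP z'. L u v z') = L u v z"

definition h1_fun :: "('a::euclidean_space \<Rightarrow> ereal) \<Rightarrow> ('a \<Rightarrow> 'c::euclidean_space) \<Rightarrow> 'c \<Rightarrow> ereal" where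
  "h1_fun f M z = conj_fun f (- adjoint M z)"

definition h2_fun :: "('b::euclidean_space \<Rightarrow> ereal) \<Rightarrow> ('b \<Rightarrow> 'c::euclidean_space) \<Rightarrow> 'c \<Rightarrow> 'c \<Rightarrow> ereal" where
  "h2_fun g C d z = conj_fun g (- adjoint C z) + ereal (inner d z)"

definition ext_sol_set :: "('c::real_inner \<Rightarrow> ereal) \<Rightarrow> ('c \<Rightarrow> ereal) \<Rightarrow> ('c \<times> 'c) set" where
  "ext_sol_set h1 h2 = {(z, w). - w \<in> subdiff h1 z \<and> w \<in> subdiff h2 z}"

end

theory Submission
  imports Defs
begin

lemma conj_upper: "ereal (inner p x) - f x \<le> conj_fun f p"
  unfolding conj_fun_def by (rule SUP_upper) auto

lemma conj_least: "(\<And>x. ereal (inner p x) - f x \<le> c) \<Longrightarrow> conj_fun f p \<le> c"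
  unfolding conj_fun_def by (rule SUP_least) auto

lemma proper_nminf: "proper_fun f \<Longrightarrow> f x \<noteq> -\<infinity>"
  unfolding proper_fun_def by auto

lemma conj_nminf:
  assumes "proper_fun f" shows "conj_fun f p \<noteq> -\<infinity>"
proof -
  obtain x0 where "f x0 < \<infinity>" using assms unfolding proper_fun_def by auto
  then obtain c where c: "f x0 = ereal c" using proper_nminf[OF assms, of x0] by (cases "f x0") auto
  have "ereal (inner p x0 - c) \<le> conj_fun f p" using conj_upper[of p x0 f] c by simp
  then show ?thesis by auto
qed

lemma FY_real:
  assumes "proper_fun f" "conj_fun f p = ereal c" "f x \<le> ereal s"
  shows "inner p x - s \<le> c"
proof -
  have "ereal (inner p x) - f x \<le> ereal c" using conj_upper[of p x f] assms(2) by simp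
  moreover have "f x \<noteq> -\<infinity>" using proper_nminf[OF assms(1)] .
  ultimately show ?thesis using assms(3)
    by (cases "f x") auto
qed

lemma FY2:
  assumes "proper_fun f"
  shows "ereal (inner x p) - conj_fun f p \<le> f x"
proof (cases "f x")
  case (real s)
  show ?thesis
  proof (cases "conj_fun f p")
    case (real c)
    have fx: "f x = ereal s" by fact
    have cp: "conj_fun f p = ereal c" by fact
    have "inner p x - s \<le> c" using FY_real[of f p c x s] assms cp fx by simp
    then show ?thesis using fx cp by (simp add: inner_commute)
  next
    case PInf then show ?thesis by simp
  next
    case MInf then show ?thesis using conj_nminf[OF assms] by simp
  qed
next
  case PInf then show ?thesis by simp
next
  case MInf then show ?thesis using proper_nminf[OF assms] by simp
qed

lemma epi_mem: "(x, s) \<in> epigraph_e f \<longleftrightarrow> f x \<le> ereal s"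
  unfolding epigraph_e_def by auto

lemma sep_epi:
  fixes f :: "'a::euclidean_space \<Rightarrow> ereal"
  assumes "proper_fun f" "closed_fun f" "convex_fun f" "\<not> f x \<le> ereal r"
  shows "\<exists>a bt b. 0 \<le> bt \<and> inner a x + bt * r < b \<and> (\<forall>x' s. f x' \<le> ereal s \<longrightarrow> b < inner a x' + bt * s)"
proof -
  have "(x, r) \<notin> epigraph_e f" using assms(4) epi_mem by metis
  then obtain A b where A: "inner A (x,r) < b" "\<forall>y\<in>epigraph_e f. inner A y > b"
    using separating_hyperplane_closed_point[of "epigraph_e f" "(x,r)"] assms(2,3)
    unfolding closed_fun_def convex_fun_def by blast
  obtain a bt where Ae: "A = (a, bt)" by (cases A)
  have H: "\<forall>x' s. f x' \<le> ereal s \<longrightarrow> b < inner a x' + bt * s"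
  proof (intro allI impI)
    fix x' s assume "f x' \<le> ereal s"
    hence "(x',s) \<in> epigraph_e f" by (simp add: epi_mem)
    hence "b < inner A (x',s)" using A(2) by blast
    thus "b < inner a x' + bt * s" using Ae by simp
  qed
  have "0 \<le> bt"
  proof (rule ccontr)
    assume "\<not> 0 \<le> bt"
    hence bn: "bt < 0" by simp
    obtain x0 where "f x0 < \<infinity>" using assms(1) unfolding proper_fun_def by auto
    then obtain c where c: "f x0 = ereal c" using proper_nminf[OF assms(1), of x0] by (cases "f x0") auto
    define s where "s = c + (\<bar>inner a x0 + bt * c - b\<bar> + 1) / (-bt)"
    have "c \<le> s" using bn unfolding s_def by (simp add: divide_nonneg_neg)
    hence "f x0 \<le> ereal s" using c by simp
    hence "b < inner a x0 + bt * s" using H by blast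
    moreover have "bt * s = bt * c - (\<bar>inner a x0 + bt * c - b\<bar> + 1)"
      using bn unfolding s_def by (simp add: field_simps)
    ultimately show False by linarith
  qed
  then show ?thesis using A(1) Ae H by auto
qed


lemma conj_bound:
  fixes f :: "'a::real_inner \<Rightarrow> ereal"
  assumes "proper_fun f" "0 < bt" "\<forall>x' s. f x' \<le> ereal s \<longrightarrow> b < inner a x' + bt * s"
  shows "conj_fun f (-(1/bt) *\<^sub>R a) \<le> ereal (-b/bt)"
proof (rule conj_least)
  fix x'
  show "ereal (inner (-(1/bt) *\<^sub>R a) x') - f x' \<le> ereal (-b/bt)"
  proof (cases "f x'")
    case (real s)
    then have "b < inner a x' + bt * s" using assms(3) by auto
    then have "-(inner a x') - bt * s \<le> -b" by simp
    then have "(-(inner a x') - bt * s)/bt \<le> (-b)/bt" by (rule divide_right_mono) (use assms(2) in auto)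
    then have "-(inner a x')/bt - s \<le> -b/bt" using assms(2) by (simp add: diff_divide_distrib)
    then show ?thesis using real by simp
  next
    case PInf then show ?thesis by simp
  next
    case MInf then show ?thesis using proper_nminf[OF assms(1)] by simp
  qed
qed

lemma dom_pt:
  assumes "proper_fun f" obtains x0 c where "f x0 = ereal c"
proof -
  obtain x0 where "f x0 < \<infinity>" using assms unfolding proper_fun_def by auto
  then obtain c where c: "f x0 = ereal c" using proper_nminf[OF assms, of x0] by (cases "f x0") auto
  then show ?thesis using that by blast
qed

lemma minorant:
  fixes f :: "'a::euclidean_space \<Rightarrow> ereal"
  assumes "proper_fun f" "closed_fun f" "convex_fun f"
  shows "\<exists>p K. conj_fun f p \<le> ereal K"
proof -
  obtain x0 c where c: "f x0 = ereal c" using dom_pt[OF assms(1)] by blast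
  have "\<not> f x0 \<le> ereal (c - 1)" using c by simp
  then obtain a bt b where ab: "0 \<le> bt" "inner a x0 + bt * (c - 1) < b"
     "\<forall>x' s. f x' \<le> ereal s \<longrightarrow> b < inner a x' + bt * s"
    using sep_epi[OF assms] by blast
  have "b < inner a x0 + bt * c" using ab(3) c by auto
  with ab(2) have "0 < bt" by (simp add: algebra_simps)
  then show ?thesis using conj_bound[OF assms(1) _ ab(3)] by blast
qed

lemma FM:
  fixes f :: "'a::euclidean_space \<Rightarrow> ereal"
  assumes "proper_fun f" "closed_fun f" "convex_fun f"
  shows "f x \<le> conj_fun (conj_fun f) x"
proof (rule ccontr)
  let ?cc = "conj_fun (conj_fun f) x"
  assume "\<not> f x \<le> ?cc"
  then have "?cc < f x" by simp
  then obtain r where r: "?cc < ereal r" "ereal r < f x" using ereal_dense2 by blast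
  then have "\<not> f x \<le> ereal r" by simp
  then obtain a bt b where ab: "0 \<le> bt" "inner a x + bt * r < b"
     "\<forall>x' s. f x' \<le> ereal s \<longrightarrow> b < inner a x' + bt * s"
    using sep_epi[OF assms] by blast
  show False
  proof (cases "bt = 0")
    case False
    then have bp: "0 < bt" using ab(1) by simp
    let ?p = "-(1/bt) *\<^sub>R a"
    have cb: "conj_fun f ?p \<le> ereal (-b/bt)" using conj_bound[OF assms(1) bp ab(3)] .
    have "ereal (inner x ?p) - conj_fun f ?p \<le> ?cc" using conj_upper by blast
    moreover have "ereal (inner x ?p) - ereal (-b/bt) \<le> ereal (inner x ?p) - conj_fun f ?p"
      by (rule ereal_minus_mono[OF order_refl cb])
    moreover have "r < inner x ?p + b/bt"
    proof -
      have "bt * r < b - inner a x" using ab(2) by simp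
      then have "r < (b - inner a x)/bt" using bp by (simp add: field_simps)
      then show ?thesis by (simp add: inner_commute diff_divide_distrib)
    qed
    then have "ereal r < ereal (inner x ?p) - ereal (-b/bt)" by simp
    ultimately have "ereal r < ?cc" by (meson order_less_le_trans)
    then show False using r by simp
  next
    case True
    have ax: "inner a x < b" using ab(2) True by simp
    have dom: "\<forall>x' s. f x' \<le> ereal s \<longrightarrow> b < inner a x'" using ab(3) True by simp
    obtain p1 K where K: "conj_fun f p1 \<le> ereal K" using minorant[OF assms] by blast
    define lam where "lam = (\<bar>r - inner x p1 + K\<bar> + 1) / (b - inner a x)"
    have lp: "0 < lam" unfolding lam_def using ax by (simp add: add_pos_nonneg)
    let ?p = "p1 - lam *\<^sub>R a"
    have cb: "conj_fun f ?p \<le> ereal (K - lam * b)"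
    proof (rule conj_least)
      fix x'
      show "ereal (inner ?p x') - f x' \<le> ereal (K - lam * b)"
      proof (cases "f x'")
        case (real s)
        have "ereal (inner p1 x') - f x' \<le> ereal K" using conj_upper[of p1 x' f] K by (rule order.trans)
        then have "inner p1 x' - s \<le> K" using real by simp
        moreover have "b < inner a x'" using dom real by (metis order_refl)
        then have "lam * b \<le> lam * inner a x'" using lp by simp
        ultimately show ?thesis using real by (simp add: inner_diff_left)
      next
        case PInf then show ?thesis by simp
      next
        case MInf then show ?thesis using proper_nminf[OF assms(1)] by simp
      qed
    qed
    have "ereal (inner x ?p) - conj_fun f ?p \<le> ?cc" using conj_upper by blast
    moreover have "ereal (inner x ?p) - ereal (K - lam * b) \<le> ereal (inner x ?p) - conj_fun f ?p"
      by (rule ereal_minus_mono[OF order_refl cb])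
    moreover have "r < inner x ?p - (K - lam * b)"
    proof -
      have "lam * (b - inner a x) = \<bar>r - inner x p1 + K\<bar> + 1" unfolding lam_def using ax by simp
      then show ?thesis by (simp add: inner_diff_right algebra_simps inner_commute)
    qed
    then have "ereal r < ereal (inner x ?p) - ereal (K - lam * b)" by simp
    ultimately have "ereal r < ?cc" by (meson order_less_le_trans)
    then show False using r by simp
  qed
qed


lemma image_closed:
  fixes f :: "'a::euclidean_space \<Rightarrow> ereal" and M :: "'a \<Rightarrow> 'c::euclidean_space"
  assumes pf: "proper_fun f" and cf: "closed_fun f" and vf: "convex_fun f" and lM: "linear M"
    and ri: "adjoint M y0 \<in> rel_interior (edom (conj_fun f))"
  shows "closed ((\<lambda>p. (M (fst p), snd p)) ` epigraph_e f)"
proof -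
  define D where "D = edom (conj_fun f)"
  define p0 where "p0 = adjoint M y0"
  have p0D: "p0 \<in> D" and "\<exists>e>0. ball p0 e \<inter> affine hull D \<subseteq> D"
    using ri unfolding mem_rel_interior_ball D_def p0_def by auto
  then obtain e where e: "e > 0" "ball p0 e \<inter> affine hull D \<subseteq> D" by blast
  define V where "V = span ((\<lambda>x. -p0 + x) ` (D - {p0}))"
  have aff: "affine hull D = (\<lambda>x. p0 + x) ` V"
    using affine_hull_span2[OF p0D] unfolding V_def .
  obtain B0 where B0: "B0 \<subseteq> V" "independent B0" "V \<subseteq> span B0"
    using maximal_independent_subset by blast
  have fB0: "finite B0" using finiteI_independent[OF B0(2)] .
  have nz: "0 \<notin> B0" using B0(2) dependent_zero by blast
  define B where "B = (\<lambda>b. (e/2/norm b) *\<^sub>R b) ` B0"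
  have fB: "finite B" using fB0 unfolding B_def by simp
  have B1: "p0 + b \<in> D \<and> p0 - b \<in> D" if bB: "b \<in> B" for b
  proof -
    obtain b0 where b0: "b0 \<in> B0" "b = (e/2/norm b0) *\<^sub>R b0" using bB unfolding B_def by blast
    have "b0 \<noteq> 0" using nz b0 by auto
    have "b \<in> V" using b0 B0(1) span_scale[of b0 "(\<lambda>x. -p0 + x) ` (D - {p0})"] unfolding V_def by auto
    moreover have "-b \<in> V" using calculation unfolding V_def by (rule span_neg)
    moreover have nb: "norm b = e/2" using b0 \<open>b0 \<noteq> 0\<close> e(1) by simp
    ultimately have "p0 + b \<in> affine hull D" "p0 + (-b) \<in> affine hull D" using aff by auto
    moreover have "p0 + b \<in> ball p0 e" "p0 + (-b) \<in> ball p0 e" using nb e(1) by (auto simp: dist_norm)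
    ultimately show ?thesis using e(2) by auto
  qed
  have B0B: "B0 \<subseteq> span B"
  proof
    fix b0 assume b0: "b0 \<in> B0"
    have "b0 \<noteq> 0" using nz b0 by auto
    have "(e/2/norm b0) *\<^sub>R b0 \<in> span B" using b0 unfolding B_def by (intro span_base) auto
    then have "(2*norm b0/e) *\<^sub>R ((e/2/norm b0) *\<^sub>R b0) \<in> span B" by (rule span_scale)
    then show "b0 \<in> span B" using \<open>b0 \<noteq> 0\<close> e(1) by simp
  qed
  have B2: "p - p0 \<in> span B" if "p \<in> D" for p
  proof -
    have "p - p0 \<in> V"
    proof (cases "p = p0")
      case True then show ?thesis unfolding V_def by (simp add: span_zero)
    next
      case False then show ?thesis using that unfolding V_def by (intro span_base) force
    qed
    then show ?thesis using B0(3) span_minimal[OF B0B subspace_span] by blast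
  qed
  have orthD: "inner p nn = 0" if "\<forall>b\<in>B. inner b nn = 0" "M nn = 0" "p \<in> D" for nn p
  proof -
    have "inner p0 nn = 0" unfolding p0_def using adjoint_clauses(2)[OF lM] that(2) by simp
    moreover have "orthogonal nn (p - p0)"
      by (rule orthogonal_to_span[OF B2[OF that(3)]]) (use that(1) in \<open>auto simp: orthogonal_def inner_commute\<close>)
    ultimately show ?thesis by (simp add: orthogonal_def inner_diff_right inner_commute)
  qed
  have finv: "f (x + nn) \<le> f x" if "\<forall>b\<in>B. inner b nn = 0" "M nn = 0" for x nn
  proof -
    have "conj_fun (conj_fun f) (x + nn) \<le> f x"
    proof (rule conj_least)
      fix p
      show "ereal (inner (x + nn) p) - conj_fun f p \<le> f x"
      proof (cases "p \<in> D")
        case True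
        then have "inner nn p = 0" using orthD[OF that] by (metis inner_commute)
        then show ?thesis using FY2[OF pf, of x p] by (simp add: inner_add_left)
      next
        case False
        then have "conj_fun f p = \<infinity>" unfolding D_def edom_def by simp
        then show ?thesis by simp
      qed
    qed
    then show ?thesis using FM[OF pf cf vf, of "x + nn"] by simp
  qed
  define cr where "cr p = real_of_ereal (conj_fun f p)" for p
  have crE: "conj_fun f p = ereal (cr p)" if "p \<in> D" for p
  proof -
    have "conj_fun f p \<noteq> \<infinity>" using that unfolding D_def edom_def by simp
    then show ?thesis unfolding cr_def using conj_nminf[OF pf, of p] by (cases "conj_fun f p") auto
  qed
  define Kb where "Kb b = \<bar>cr (p0 + b)\<bar> + \<bar>cr (p0 - b)\<bar>" for b
  have Kbound: "\<bar>inner b x\<bar> \<le> s - inner p0 x + Kb b" if "b \<in> B" "f x \<le> ereal s" for b x s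
  proof -
    have "inner (p0 + b) x - s \<le> cr (p0 + b)" using FY_real[OF pf crE that(2)] B1[OF that(1)] by blast
    moreover have "inner (p0 - b) x - s \<le> cr (p0 - b)" using FY_real[OF pf crE that(2)] B1[OF that(1)] by blast
    ultimately show ?thesis unfolding Kb_def by (simp add: inner_add_left inner_diff_left abs_le_iff) (smt (verit) abs_ge_self)
  qed
  define N where "N = {nn. (\<forall>b\<in>B. inner b nn = 0) \<and> M nn = 0}"
  have subN: "subspace N" unfolding N_def subspace_def
    by (auto simp: inner_add_right linear_add[OF lM] linear_scale[OF lM] linear_0[OF lM])
  define NP where "NP = {r. \<forall>w\<in>N. inner r w = 0}"
  have subNP: "subspace NP" unfolding NP_def subspace_def
    by (auto simp: inner_add_left)
  have clNP: "closed NP" using closed_subspace[OF subNP] .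
  define T where "T x = ((\<Sum>b\<in>B. inner b x *\<^sub>R b), M x)" for x
  have linT: "linear T"
  proof (rule linearI)
    fix x y :: 'a and c :: real
    show "T (x + y) = T x + T y" unfolding T_def
      by (simp add: inner_add_right scaleR_add_left sum.distrib linear_add[OF lM])
    show "T (c *\<^sub>R x) = c *\<^sub>R T x" unfolding T_def
      by (simp add: scaleR_sum_right linear_scale[OF lM])
  qed
  have injT: "\<forall>r\<in>NP. T r = 0 \<longrightarrow> r = 0"
  proof (intro ballI impI)
    fix r assume rNP: "r \<in> NP" and T0: "T r = 0"
    have s0: "(\<Sum>b\<in>B. inner b r *\<^sub>R b) = 0" and Mr: "M r = 0" using T0 unfolding T_def by (auto simp: zero_prod_def)
    have "(\<Sum>b\<in>B. (inner b r)\<^sup>2) = inner r (\<Sum>b\<in>B. inner b r *\<^sub>R b)"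
      by (simp add: inner_sum_right power2_eq_square inner_commute)
    also have "\<dots> = 0" using s0 by simp
    finally have "\<forall>b\<in>B. (inner b r)\<^sup>2 = 0" using sum_nonneg_eq_0_iff[OF fB, of "\<lambda>b. (inner b r)\<^sup>2"] by simp
    then have "r \<in> N" unfolding N_def using Mr by simp
    then have "inner r r = 0" using rNP unfolding NP_def by blast
    then show "r = 0" by simp
  qed
  obtain eps where eps: "eps > 0" "\<forall>r\<in>NP. norm (T r) \<ge> eps * norm r"
    using injective_imp_isometric[OF clNP subNP _ injT] linT linear_conv_bounded_linear by blast
  let ?E = "(\<lambda>p. (M (fst p), snd p)) ` epigraph_e f"
  show ?thesis unfolding closed_sequential_limits
  proof (intro allI impI)
    fix X l assume H: "(\<forall>n. X n \<in> ?E) \<and> X \<longlonglongrightarrow> l"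
    have "\<forall>n. \<exists>x. M x = fst (X n) \<and> f x \<le> ereal (snd (X n))"
    proof
      fix n
      obtain pp where "pp \<in> epigraph_e f" "X n = (M (fst pp), snd pp)" using H by blast
      then show "\<exists>x. M x = fst (X n) \<and> f x \<le> ereal (snd (X n))"
        by (cases pp) (auto simp: epi_mem)
    qed
    then obtain xs where xs: "\<And>n. M (xs n) = fst (X n)" "\<And>n. f (xs n) \<le> ereal (snd (X n))" by metis
    have "\<forall>n. \<exists>r. r \<in> NP \<and> xs n - r \<in> N"
    proof
      fix n
      obtain y z where yz: "y \<in> span N" "\<And>w. w \<in> span N \<Longrightarrow> orthogonal z w" "xs n = y + z"
        using orthogonal_subspace_decomp_exists by blast
      have "z \<in> NP" using yz(2) span_base unfolding NP_def orthogonal_def by blast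
      moreover have "xs n - z \<in> N" 
      proof -
        have "xs n - z = y" using yz(3) by simp
        moreover have "y \<in> N" using yz(1) span_subspace[OF order_refl span_superset subN] by blast
        ultimately show ?thesis by simp
      qed
      ultimately show "\<exists>r. r \<in> NP \<and> xs n - r \<in> N" by blast
    qed
    then obtain rs where rs: "\<And>n. rs n \<in> NP" "\<And>n. xs n - rs n \<in> N" by metis
    have frs: "f (rs n) \<le> ereal (snd (X n))" for n
    proof -
      have "-(xs n - rs n) \<in> N" using subspace_neg[OF subN rs(2)] .
      then have "f (xs n + (-(xs n - rs n))) \<le> f (xs n)" using finv unfolding N_def by blast
      then show ?thesis using xs(2)[of n] by simp
    qed
    have Mrs: "M (rs n) = fst (X n)" for n
    proof -
      have "M (xs n - rs n) = 0" using rs(2) unfolding N_def by blast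
      then show ?thesis using xs(1)[of n] linear_diff[OF lM] by simp
    qed
    have Xl: "X \<longlonglongrightarrow> l" using H by blast
    have sl: "(\<lambda>n. snd (X n)) \<longlonglongrightarrow> snd l" using tendsto_snd[OF Xl] .
    have ql: "(\<lambda>n. fst (X n)) \<longlonglongrightarrow> fst l" using tendsto_fst[OF Xl] .
    obtain S where S: "\<And>n. \<bar>snd (X n)\<bar> \<le> S"
      using convergent_imp_bounded[OF sl] unfolding bounded_iff by auto
    obtain Q where Q: "\<And>n. norm (fst (X n)) \<le> Q"
      using convergent_imp_bounded[OF ql] unfolding bounded_iff by auto
    have ib: "\<bar>inner b (rs n)\<bar> \<le> S + norm y0 * Q + Kb b" if "b \<in> B" for b n
    proof -
      have "inner p0 (rs n) = inner y0 (fst (X n))"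
        unfolding p0_def using adjoint_clauses(2)[OF lM] Mrs by simp
      moreover have "\<bar>inner y0 (fst (X n))\<bar> \<le> norm y0 * norm (fst (X n))" by (rule Cauchy_Schwarz_ineq2)
      moreover have "norm y0 * norm (fst (X n)) \<le> norm y0 * Q" by (rule mult_left_mono[OF Q]) simp
      ultimately have "\<bar>inner p0 (rs n)\<bar> \<le> norm y0 * Q" by simp
      moreover have "snd (X n) \<le> S" using S[of n] by simp
      ultimately show ?thesis using Kbound[OF that frs[of n]] by linarith
    qed
    define R where "R = (\<Sum>b\<in>B. (S + norm y0 * Q + Kb b) * norm b) + Q"
    have nT: "norm (T (rs n)) \<le> R" for n
    proof -
      have "norm (T (rs n)) \<le> norm (\<Sum>b\<in>B. inner b (rs n) *\<^sub>R b) + norm (M (rs n))"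
        unfolding T_def by (rule norm_Pair_le)
      also have "norm (\<Sum>b\<in>B. inner b (rs n) *\<^sub>R b) \<le> (\<Sum>b\<in>B. \<bar>inner b (rs n)\<bar> * norm b)"
        by (rule order_trans[OF norm_sum]) simp
      also have "\<dots> \<le> (\<Sum>b\<in>B. (S + norm y0 * Q + Kb b) * norm b)"
        by (rule sum_mono) (simp add: ib mult_right_mono)
      finally show ?thesis unfolding R_def using Q[of n] Mrs[of n] by simp
    qed
    have "norm (rs n) \<le> R / eps" for n
    proof -
      have "eps * norm (rs n) \<le> R" using eps(2) rs(1)[of n] nT[of n] by (meson order_trans)
      then show ?thesis by (simp add: pos_le_divide_eq[OF eps(1)] mult.commute)
    qed
    then have "bounded (range rs)" unfolding bounded_iff by blast
    then obtain ll sg where sg: "strict_mono sg" "(rs \<circ> sg) \<longlonglongrightarrow> ll"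
      using bounded_imp_convergent_subsequence by blast
    have lim1: "(\<lambda>n. (rs (sg n), snd (X (sg n)))) \<longlonglongrightarrow> (ll, snd l)"
      using tendsto_Pair[OF sg(2) LIMSEQ_subseq_LIMSEQ[OF sl sg(1)]] by (simp add: o_def)
    have epn: "\<forall>n. (rs (sg n), snd (X (sg n))) \<in> epigraph_e f" using frs by (simp add: epi_mem)
    have cl: "closed (epigraph_e f)" using cf unfolding closed_fun_def .
    have "(ll, snd l) \<in> epigraph_e f"
      using closed_sequential_limits[THEN iffD1, OF cl, rule_format, of "\<lambda>n. (rs (sg n), snd (X (sg n)))" "(ll, snd l)"] epn lim1 by blast
    moreover have "M ll = fst l"
    proof -
      have "(\<lambda>n. M (rs (sg n))) \<longlonglongrightarrow> M ll"
        using bounded_linear.tendsto[OF linear_conv_bounded_linear[THEN iffD1, OF lM] sg(2)] by (simp add: o_def)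
      moreover have "(\<lambda>n. M (rs (sg n))) \<longlonglongrightarrow> fst l"
        using LIMSEQ_subseq_LIMSEQ[OF ql sg(1)] Mrs by (simp add: o_def)
      ultimately show ?thesis using LIMSEQ_unique by blast
    qed
    ultimately show "l \<in> ?E" by (intro image_eqI[of _ _ "(ll, snd l)"]) auto
  qed
qed


lemma adj_inner:
  fixes M :: "'a::euclidean_space \<Rightarrow> 'c::euclidean_space"
  assumes "linear M" shows "inner (- adjoint M y) x = - inner y (M x)"
  using adjoint_clauses(2)[OF assms] by (simp add: inner_minus_left)

lemma core:
  fixes f :: "'a::euclidean_space \<Rightarrow> ereal" and M :: "'a \<Rightarrow> 'c::euclidean_space"
  assumes pf: "proper_fun f" and cf: "closed_fun f" and vf: "convex_fun f" and lM: "linear M"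
    and ri: "rel_interior (edom (conj_fun f)) \<inter> range (adjoint M) \<noteq> {}"
    and kz: "\<bar>conj_fun f (- adjoint M z)\<bar> \<noteq> \<infinity>"
    and sub: "\<And>y. conj_fun f (- adjoint M z) + ereal (inner (-w) (y - z)) \<le> conj_fun f (- adjoint M y)"
  shows "\<exists>u. M u = w \<and> f u \<noteq> \<infinity> \<and> (\<forall>x. f u + ereal (inner z (M u)) \<le> f x + ereal (inner z (M x)))"
proof -
  obtain y0 where y0: "adjoint M y0 \<in> rel_interior (edom (conj_fun f))" using ri by blast
  obtain kr where kr: "conj_fun f (- adjoint M z) = ereal kr" using kz by (cases "conj_fun f (- adjoint M z)") auto
  define V where "V = - kr"
  have Vle: "ereal V \<le> f x + ereal (inner z (M x))" for x
  proof -
    have "ereal (inner (- adjoint M z) x) - f x \<le> ereal kr" using conj_upper[of "- adjoint M z" x f] kr by simp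
    then have "ereal (- inner z (M x)) - f x \<le> ereal kr" using adj_inner[OF lM] by simp
    then show ?thesis unfolding V_def using proper_nminf[OF pf, of x] by (cases "f x") auto
  qed
  let ?L = "\<lambda>p::'a \<times> real. (M (fst p), snd p)"
  let ?E = "?L ` epigraph_e f"
  define F where "F = (\<lambda>q::'c \<times> real. (fst q, snd q - inner z (fst q)))"
  have linL: "linear ?L" using lM by (intro linearI) (auto simp: linear_add linear_scale)
  have linF: "linear F" unfolding F_def by (intro linearI) (auto simp: inner_add_right algebra_simps)
  have clE: "closed ?E" using image_closed[OF pf cf vf lM y0] .
  have cvE: "convex ?E" using convex_linear_image[OF linL] vf unfolding convex_fun_def by blast
  have clEz: "closed (F -` ?E)"
    by (rule closed_vimage[OF clE]) (simp add: F_def continuous_intros)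
  have cvEz: "convex (F -` ?E)" using convex_linear_vimage[OF linF cvE] .
  have memb: "(M x, c + inner z (M x) + t) \<in> F -` ?E" if "f x = ereal c" "0 \<le> t" for x c t
  proof -
    have "(x, c + t) \<in> epigraph_e f" using that by (simp add: epi_mem)
    then show ?thesis unfolding F_def by (auto intro!: image_eqI[of _ _ "(x, c + t)"])
  qed
  have "(w, V) \<in> F -` ?E"
  proof (rule ccontr)
    assume "(w, V) \<notin> F -` ?E"
    then obtain A b where A: "inner A (w, V) < b" "\<forall>y\<in>F -` ?E. b < inner A y"
      using separating_hyperplane_closed_point[OF cvEz clEz] by blast
    obtain a bt where Ae: "A = (a, bt)" by (cases A)
    have H: "b < inner a (M x) + bt * (c + inner z (M x) + t)" if "f x = ereal c" "0 \<le> t" for x c t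
    proof -
      have "b < inner A (M x, c + inner z (M x) + t)" using A(2) memb[OF that] by blast
      then show ?thesis using Ae by simp
    qed
    obtain x0 c0 where c0: "f x0 = ereal c0" using dom_pt[OF pf] by blast
    have "0 \<le> bt"
    proof (rule ccontr)
      assume "\<not> 0 \<le> bt"
      hence bn: "bt < 0" by simp
      define t where "t = (\<bar>inner a (M x0) + bt * (c0 + inner z (M x0)) - b\<bar> + 1) / (-bt)"
      have "0 \<le> t" using bn unfolding t_def by (simp add: divide_nonneg_neg)
      hence "b < inner a (M x0) + bt * (c0 + inner z (M x0) + t)" using H c0 by blast
      moreover have "bt * t = - (\<bar>inner a (M x0) + bt * (c0 + inner z (M x0)) - b\<bar> + 1)"
        using bn unfolding t_def by (simp add: field_simps)
      ultimately show False by (simp add: algebra_simps)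
    qed
    have Aw: "inner a w + bt * V < b" using A(1) Ae by simp
    show False
    proof (cases "bt = 0")
      case False
      then have bp: "0 < bt" using \<open>0 \<le> bt\<close> by simp
      define ta where "ta = (1/bt) *\<^sub>R a"
      have "conj_fun f (- adjoint M (z + ta)) \<le> ereal (-b/bt)"
      proof (rule conj_least)
        fix x
        show "ereal (inner (- adjoint M (z + ta)) x) - f x \<le> ereal (-b/bt)"
        proof (cases "f x")
          case (real c)
          have "b < inner a (M x) + bt * (c + inner z (M x))" using H[OF real order_refl] by simp
          then have "(- inner a (M x) - bt * (c + inner z (M x)))/bt \<le> (-b)/bt"
            by (intro divide_right_mono) (use bp in auto)
          then have "- inner (z + ta) (M x) - c \<le> -b/bt"
            using bp unfolding ta_def by (simp add: inner_add_left diff_divide_distrib add_divide_distrib algebra_simps)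
          then show ?thesis using real adj_inner[OF lM] by simp
        next
          case PInf then show ?thesis by simp
        next
          case MInf then show ?thesis using proper_nminf[OF pf] by simp
        qed
      qed
      then have "ereal kr + ereal (inner (-w) (z + ta - z)) \<le> ereal (-b/bt)"
        using sub[of "z + ta"] kr by (metis order_trans)
      then have "kr - inner w ta \<le> -b/bt" by simp
      then have "kr - inner w a / bt \<le> -b/bt" unfolding ta_def by simp
      then have "(kr - inner w a / bt) * bt \<le> (-b/bt) * bt" by (rule mult_right_mono) (use bp in auto)
      then have "bt * kr - inner w a \<le> -b" using bp by (simp add: algebra_simps)
      then show False using Aw unfolding V_def by (simp add: inner_commute algebra_simps)
    next
      case True
      have "conj_fun f (- adjoint M (z + a)) \<le> ereal (kr - b)"
      proof (rule conj_least)
        fix x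
        show "ereal (inner (- adjoint M (z + a)) x) - f x \<le> ereal (kr - b)"
        proof (cases "f x")
          case (real c)
          have "b < inner a (M x)" using H[OF real order_refl] True by simp
          moreover have "ereal (inner (- adjoint M z) x) - f x \<le> ereal kr" using conj_upper[of "- adjoint M z" x f] kr by simp
          then have "- inner z (M x) - c \<le> kr" using real adj_inner[OF lM] by simp
          ultimately have "- inner (z + a) (M x) - c \<le> kr - b" by (simp add: inner_add_left)
          then show ?thesis using real adj_inner[OF lM] by simp
        next
          case PInf then show ?thesis by simp
        next
          case MInf then show ?thesis using proper_nminf[OF pf] by simp
        qed
      qed
      then have "ereal kr + ereal (inner (-w) (z + a - z)) \<le> ereal (kr - b)"
        using sub[of "z + a"] kr by (metis order_trans)
      then have "b \<le> inner w a" by simp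
      then show False using Aw True by (simp add: inner_commute)
    qed
  qed
  then obtain p where p: "p \<in> epigraph_e f" "F (w, V) = ?L p" by blast
  obtain u s where us: "p = (u, s)" by (cases p)
  have Mu: "M u = w" and s: "s = V - inner z w" using p(2) us unfolding F_def by auto
  have fu: "f u \<le> ereal (V - inner z w)" using p(1) us s by (simp add: epi_mem)
  have "f u \<noteq> \<infinity>" using fu by auto
  moreover have "f u + ereal (inner z (M u)) \<le> f x + ereal (inner z (M x))" for x
  proof -
    have "f u + ereal (inner z (M u)) \<le> ereal V"
      using fu Mu proper_nminf[OF pf, of u] by (cases "f u") auto
    then show ?thesis using Vle[of x] by (rule order_trans)
  qed
  ultimately show ?thesis using Mu by blast
qed


lemma conj_at_min:
  fixes f :: "'a::euclidean_space \<Rightarrow> ereal" and M :: "'a \<Rightarrow> 'c::euclidean_space"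
  assumes pf: "proper_fun f" and lM: "linear M" and fu: "f u = ereal r"
    and mn: "\<forall>x. f u + ereal (inner z (M u)) \<le> f x + ereal (inner z (M x))"
  shows "conj_fun f (- adjoint M z) = ereal (-(r + inner z (M u)))"
proof (rule antisym)
  show "conj_fun f (- adjoint M z) \<le> ereal (-(r + inner z (M u)))"
  proof (rule conj_least)
    fix x
    show "ereal (inner (- adjoint M z) x) - f x \<le> ereal (-(r + inner z (M u)))"
    proof (cases "f x")
      case (real c)
      then have "r + inner z (M u) \<le> c + inner z (M x)" using mn fu by (metis plus_ereal.simps(1) ereal_less_eq(3))
      then show ?thesis using real adj_inner[OF lM] by simp
    next
      case PInf then show ?thesis by simp
    next
      case MInf then show ?thesis using proper_nminf[OF pf] by simp
    qed
  qed
  show "ereal (-(r + inner z (M u))) \<le> conj_fun f (- adjoint M z)"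
  proof -
    have "ereal (inner (- adjoint M z) u) - f u \<le> conj_fun f (- adjoint M z)" by (rule conj_upper)
    moreover have "ereal (inner (- adjoint M z) u) - f u = ereal (-(r + inner z (M u)))"
      using fu adj_inner[OF lM] by simp
    ultimately show ?thesis by simp
  qed
qed

lemma sub_from_min:
  fixes f :: "'a::euclidean_space \<Rightarrow> ereal" and M :: "'a \<Rightarrow> 'c::euclidean_space"
  assumes pf: "proper_fun f" and lM: "linear M" and fu: "f u = ereal r"
    and mn: "\<forall>x. f u + ereal (inner z (M u)) \<le> f x + ereal (inner z (M x))"
  shows "conj_fun f (- adjoint M z) + ereal (inner (- M u) (y - z)) \<le> conj_fun f (- adjoint M y)"
proof -
  have "ereal (inner (- adjoint M y) u) - f u \<le> conj_fun f (- adjoint M y)" by (rule conj_upper)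
  then have "ereal (- inner y (M u) - r) \<le> conj_fun f (- adjoint M y)" using fu adj_inner[OF lM] by simp
  moreover have "- inner y (M u) - r = -(r + inner z (M u)) + inner (- M u) (y - z)"
    by (simp add: inner_diff_right inner_commute algebra_simps)
  ultimately show ?thesis using conj_at_min[OF pf lM fu mn] by simp
qed

lemma realE: assumes "f x \<noteq> \<infinity>" "f x \<noteq> -\<infinity>" obtains r where "f x = ereal r"
  using assms by (cases "f x") auto

lemma part1:
  fixes f :: "'a::euclidean_space \<Rightarrow> ereal" and g :: "'b::euclidean_space \<Rightarrow> ereal"
    and M :: "'a \<Rightarrow> 'c::euclidean_space" and C :: "'b \<Rightarrow> 'c"
  assumes pf: "proper_fun f" and pg: "proper_fun g" and lM: "linear M" and lC: "linear C"
    and sp: "saddle_point (lagrangian f g M C d) u v z"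
  shows "(z, d - C v) \<in> ext_sol_set (h1_fun f M) (h2_fun g C d)"
proof -
  let ?L = "lagrangian f g M C d"
  have fin: "\<bar>?L u v z\<bar> \<noteq> \<infinity>" and inf: "(INF p. ?L (fst p) (snd p) z) = ?L u v z"
    and sup: "(SUP z'. ?L u v z') = ?L u v z" using sp unfolding saddle_point_def by auto
  have "f u \<noteq> \<infinity>" using fin proper_nminf[OF pg, of v] unfolding lagrangian_def by auto
  then obtain fu where fu: "f u = ereal fu" using proper_nminf[OF pf] realE by metis
  have "g v \<noteq> \<infinity>" using fin fu unfolding lagrangian_def by auto
  then obtain gv where gv: "g v = ereal gv" using proper_nminf[OF pg] realE by metis
  define ee where "ee = M u + C v - d"
  have Lz: "?L u v z' = ereal (fu + gv + inner ee z')" for z'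
    unfolding lagrangian_def ee_def using fu gv by simp
  have "?L u v (z + ee) \<le> ?L u v z" using sup by (metis SUP_upper UNIV_I)
  then have "inner ee ee \<le> 0" unfolding Lz by (simp add: inner_add_right)
  then have "ee = 0" by (metis inner_eq_zero_iff inner_ge_zero antisym)
  then have Mu: "M u = d - C v" unfolding ee_def by (simp add: algebra_simps)
  have Lle: "?L u v z \<le> ?L x y z" for x y
    using inf INF_lower[of "(x,y)" UNIV "\<lambda>p. ?L (fst p) (snd p) z"] by simp
  have minf: "\<forall>x. f u + ereal (inner z (M u)) \<le> f x + ereal (inner z (M x))"
  proof
    fix x
    show "f u + ereal (inner z (M u)) \<le> f x + ereal (inner z (M x))"
    proof (cases "f x")
      case (real c)
      have "?L u v z \<le> ?L x v z" by (rule Lle)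
      then have "fu + gv + inner (M u + C v - d) z \<le> c + gv + inner (M x + C v - d) z"
        unfolding lagrangian_def using fu gv real by simp
      then show ?thesis using fu real by (simp add: inner_add_right inner_diff_right inner_add_left inner_diff_left inner_commute)
    qed (use proper_nminf[OF pf] in auto)
  qed
  have ming: "\<forall>y. g v + ereal (inner z (C v)) \<le> g y + ereal (inner z (C y))"
  proof
    fix y
    show "g v + ereal (inner z (C v)) \<le> g y + ereal (inner z (C y))"
    proof (cases "g y")
      case (real c)
      have "?L u v z \<le> ?L u y z" by (rule Lle)
      then have "fu + gv + inner (M u + C v - d) z \<le> fu + c + inner (M u + C y - d) z"
        unfolding lagrangian_def using fu gv real by simp
      then show ?thesis using gv real by (simp add: inner_add_right inner_diff_right inner_add_left inner_diff_left inner_commute)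
    qed (use proper_nminf[OF pg] in auto)
  qed
  have s1: "-(d - C v) \<in> subdiff (h1_fun f M) z"
    unfolding subdiff_def h1_fun_def
    using conj_at_min[OF pf lM fu minf] sub_from_min[OF pf lM fu minf] Mu by auto
  have cg: "conj_fun g (- adjoint C z) = ereal (-(gv + inner z (C v)))" using conj_at_min[OF pg lC gv ming] .
  have s2: "d - C v \<in> subdiff (h2_fun g C d) z"
    unfolding subdiff_def h2_fun_def
  proof (intro CollectI conjI allI)
    show "\<bar>conj_fun g (- adjoint C z) + ereal (inner d z)\<bar> \<noteq> \<infinity>" using cg by simp
    fix y
    have A: "conj_fun g (- adjoint C z) + ereal (inner (- C v) (y - z)) \<le> conj_fun g (- adjoint C y)"
      using sub_from_min[OF pg lC gv ming] .
    show "conj_fun g (- adjoint C z) + ereal (inner d z) + ereal (inner (d - C v) (y - z))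
          \<le> conj_fun g (- adjoint C y) + ereal (inner d y)"
    proof (cases "conj_fun g (- adjoint C y)")
      case (real c)
      then show ?thesis using A cg by (simp add: inner_diff_left inner_diff_right algebra_simps)
    next
      case PInf then show ?thesis using cg by simp
    next
      case MInf then show ?thesis using conj_nminf[OF pg] by simp
    qed
  qed
  show ?thesis unfolding ext_sol_set_def using s1 s2 by simp
qed


theorem mainTheorem1:
  fixes f :: "'a::euclidean_space \<Rightarrow> ereal"
    and g :: "'b::euclidean_space \<Rightarrow> ereal"
    and M :: "'a \<Rightarrow> 'c::euclidean_space"
    and C :: "'b \<Rightarrow> 'c"
    and d :: 'c
  assumes "proper_fun f" "closed_fun f" "convex_fun f"
    and "proper_fun g" "closed_fun g" "convex_fun g"
    and "linear M" "linear C"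
  shows "(\<forall>u v z. saddle_point (lagrangian f g M C d) u v z \<longrightarrow>
            (z, d - C v) \<in> ext_sol_set (h1_fun f M) (h2_fun g C d))
       \<and> ((rel_interior (edom (conj_fun f)) \<inter> range (adjoint M) \<noteq> {} \<and>
            rel_interior (edom (conj_fun g)) \<inter> range (adjoint C) \<noteq> {}) \<longrightarrow>
           (\<forall>z w. (z, w) \<in> ext_sol_set (h1_fun f M) (h2_fun g C d) \<longrightarrow>
              (\<exists>u v. w = d - C v \<and> w = M u \<and> saddle_point (lagrangian f g M C d) u v z)))"
proof (intro conjI impI allI)
  note pf = assms(1) and cf = assms(2) and vf = assms(3)
    and pg = assms(4) and cg = assms(5) and vg = assms(6) and lM = assms(7) and lC = assms(8)
  fix u v z
  assume "saddle_point (lagrangian f g M C d) u v z"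
  then show "(z, d - C v) \<in> ext_sol_set (h1_fun f M) (h2_fun g C d)"
    using part1[OF pf pg lM lC] by blast
next
  note pf = assms(1) and cf = assms(2) and vf = assms(3)
    and pg = assms(4) and cg = assms(5) and vg = assms(6) and lM = assms(7) and lC = assms(8)
  fix z w
  assume ri: "rel_interior (edom (conj_fun f)) \<inter> range (adjoint M) \<noteq> {} \<and>
            rel_interior (edom (conj_fun g)) \<inter> range (adjoint C) \<noteq> {}"
    and zw: "(z, w) \<in> ext_sol_set (h1_fun f M) (h2_fun g C d)"
  have s1: "-w \<in> subdiff (h1_fun f M) z" and s2: "w \<in> subdiff (h2_fun g C d) z"
    using zw unfolding ext_sol_set_def by auto
  have k1: "\<bar>conj_fun f (- adjoint M z)\<bar> \<noteq> \<infinity>"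
    and sub1: "\<And>y. conj_fun f (- adjoint M z) + ereal (inner (-w) (y - z)) \<le> conj_fun f (- adjoint M y)"
    using s1 unfolding subdiff_def h1_fun_def by auto
  obtain u where u: "M u = w" "f u \<noteq> \<infinity>" "\<forall>x. f u + ereal (inner z (M u)) \<le> f x + ereal (inner z (M x))"
  proof -
    have ri1: "rel_interior (edom (conj_fun f)) \<inter> range (adjoint M) \<noteq> {}" using ri by blast
    show ?thesis using core[OF pf cf vf lM ri1 k1 sub1] that by blast
  qed
  have k2a: "\<bar>conj_fun g (- adjoint C z) + ereal (inner d z)\<bar> \<noteq> \<infinity>"
    and sub2a: "\<And>y. conj_fun g (- adjoint C z) + ereal (inner d z) + ereal (inner w (y - z))
                   \<le> conj_fun g (- adjoint C y) + ereal (inner d y)"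
    using s2 unfolding subdiff_def h2_fun_def by auto
  have k2: "\<bar>conj_fun g (- adjoint C z)\<bar> \<noteq> \<infinity>" using k2a by auto
  then obtain c2 where c2: "conj_fun g (- adjoint C z) = ereal c2" by (cases "conj_fun g (- adjoint C z)") auto
  have sub2: "conj_fun g (- adjoint C z) + ereal (inner (-(d - w)) (y - z)) \<le> conj_fun g (- adjoint C y)" for y
  proof (cases "conj_fun g (- adjoint C y)")
    case (real c)
    then show ?thesis using sub2a[of y] c2 by (simp add: inner_diff_left inner_diff_right algebra_simps)
  next
    case PInf then show ?thesis by simp
  next
    case MInf then show ?thesis using conj_nminf[OF pg] by simp
  qed
  obtain v where v: "C v = d - w" "g v \<noteq> \<infinity>" "\<forall>y. g v + ereal (inner z (C v)) \<le> g y + ereal (inner z (C y))"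
  proof -
    have ri2: "rel_interior (edom (conj_fun g)) \<inter> range (adjoint C) \<noteq> {}" using ri by blast
    show ?thesis using core[OF pg cg vg lC ri2 k2 sub2] that by blast
  qed
  obtain fu where fu: "f u = ereal fu" using u(2) proper_nminf[OF pf] realE by metis
  obtain gv where gv: "g v = ereal gv" using v(2) proper_nminf[OF pg] realE by metis
  let ?L = "lagrangian f g M C d"
  have e0: "M u + C v - d = 0" using u(1) v(1) by simp
  have Lc: "?L u v z' = ereal (fu + gv)" for z' unfolding lagrangian_def using e0 fu gv by simp
  have "(INF p. ?L (fst p) (snd p) z) = ereal (fu + gv)"
  proof (rule antisym)
    show "(INF p. ?L (fst p) (snd p) z) \<le> ereal (fu + gv)"
      using INF_lower[of "(u,v)" UNIV "\<lambda>p. ?L (fst p) (snd p) z"] Lc by simp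
    show "ereal (fu + gv) \<le> (INF p. ?L (fst p) (snd p) z)"
    proof (rule INF_greatest)
      fix p :: "'a \<times> 'b"
      obtain x y where p: "p = (x, y)" by (cases p)
      show "ereal (fu + gv) \<le> ?L (fst p) (snd p) z"
      proof (cases "f x")
        case (real c)
        show ?thesis
        proof (cases "g y")
          case (real c')
          have "f u + ereal (inner z (M u)) \<le> f x + ereal (inner z (M x))" using u(3) by blast
          then have "fu + inner z (M u) \<le> c + inner z (M x)" using fu \<open>f x = ereal c\<close> by simp
          moreover have "g v + ereal (inner z (C v)) \<le> g y + ereal (inner z (C y))" using v(3) by blast
          then have "gv + inner z (C v) \<le> c' + inner z (C y)" using gv real by simp
          moreover have "inner z (M u + C v - d) = 0" using e0 by simp
          then have "inner z (M u) + inner z (C v) - inner z d = 0"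
            by (simp add: inner_add_right inner_diff_right)
          moreover have "inner z (M x + C y - d) = inner z (M x) + inner z (C y) - inner z d"
            by (simp add: inner_add_right inner_diff_right)
          ultimately have "fu + gv \<le> c + c' + inner (M x + C y - d) z" by (simp add: inner_commute)
          then show ?thesis using p \<open>f x = ereal c\<close> real unfolding lagrangian_def by simp
        next
          case PInf then show ?thesis using p \<open>f x = ereal c\<close> unfolding lagrangian_def by simp
        next
          case MInf then show ?thesis using proper_nminf[OF pg] by simp
        qed
      next
        case PInf then show ?thesis using p proper_nminf[OF pg, of y] unfolding lagrangian_def by simp
      next
        case MInf then show ?thesis using proper_nminf[OF pf] by simp
      qed
    qed
  qed
  then have "saddle_point ?L u v z" unfolding saddle_point_def using Lc by simp
  then show "\<exists>u v. w = d - C v \<and> w = M u \<and> saddle_point ?L u v z"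
  proof -
    have "w = d - C v" using v(1) by simp
    then show ?thesis using u(1) \<open>saddle_point ?L u v z\<close>
      by (intro exI[of _ u] exI[of _ v]) simp
  qed
qed

end
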